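(* Assume $\widetilde{\epsilon}>0$. For $\zeta\in[a,\tau]$ define $$\widetilde{M_2}(\zeta)=\frac{1-\tau_2}{\epsilon-\widetilde{\epsilon}}\,\frac{1-e^{-r(\omega-\tau)}}{ra_\tau}\left(e^{\epsilon(\tau-\zeta)}-e^{\widetilde{\epsilon}(\tau-\zeta)}\right)-\frac{1-\tau_1}{\epsilon}\left(e^{\epsilon(\tau-\zeta)}-1\right),$$ so that $\widetilde{M_2}(\tau)=0$ and $\widetilde{M_2}'(\tau)=1-\tau_1-\frac{1-\tau_2}{ra_\tau}\left(1-e^{-r(\omega-\tau)}\right)$. Then: (i) If $\widetilde{M_2}(a)\ge0$ and $\widetilde{M_2}'(\tau)>0$, there exists a critical age $\bar{\zeta}\in[a,\tau)$ such that $\widetilde{M_2}(\zeta)>0$ for $a\le\zeta<\bar{\zeta}$, $\widetilde{M_2}(\bar{\zeta})=0$, and $\widetilde{M_2}(\zeta)<0$ for $\bar{\zeta}<\zeta<\tau$ (younger participants prefer EET to individual savings, older ones prefer individual savings). (ii) If $\widetilde{M_2}(a)<0$, then $\widetilde{M_2}(\zeta)<0$ for all $\zeta\in[a,\tau)$ (all prefer individual savings to EET). (iii) If $\widetilde{M_2}'(\tau)\le0$, then $\widetilde{M_2}(\zeta)>0$ for all $\zeta\in[a,\tau)$ (all prefer EET to individual savings).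
   Context: Parameters: $r>0$, $\mu>r$, $\sigma>0$, real $\gamma,\xi,\alpha,\beta$; $\nu=(\mu-r)/\sigma$, $\epsilon=\gamma-r-\xi\nu\neq0$, $\widetilde{\epsilon}=\alpha-r-\beta\nu\neq\epsilon$. Ages $a<\tau<\omega$; tax rates $\tau_1,\tau_2\in[0,1)$. With survival function $s(x)=e^{-A_m(x-a)-\frac{B_m}{\ln c}(c^x-c^a)}$ (Makeham constants $A_m,B_m,c$), $a_\tau=\int_0^\infty e^{-(r+A_m)t-\frac{B_m}{\ln c}c^\tau(c^t-1)}dt\in(0,\infty)$ is the annuity factor. Interpretation: $\zeta$ is a participant's age at the decision time, and the sign of $\widetilde{M_2}(\zeta)$ is the sign of the effect of raising the EET contribution rate $k$ (relative to individual savings) on that participant's value function. *)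

theory Defs
  imports "HOL-Analysis.Analysis"
begin

text \<open>Integrand of the annuity factor (Gompertz-Makeham survival).\<close>
definition ann_integrand :: "real \<Rightarrow> real \<Rightarrow> real \<Rightarrow> real \<Rightarrow> real \<Rightarrow> real \<Rightarrow> real" where
  "ann_integrand r Am Bm c tau t =
     exp (- (r + Am) * t - Bm / ln c * c powr tau * (c powr t - 1))"

definition annuity :: "real \<Rightarrow> real \<Rightarrow> real \<Rightarrow> real \<Rightarrow> real \<Rightarrow> real" where
  "annuity r Am Bm c tau = (\<integral>t\<in>{0..}. ann_integrand r Am Bm c tau t \<partial>lborel)"

definition M2t :: "real \<Rightarrow> real \<Rightarrow> real \<Rightarrow> real \<Rightarrow> real \<Rightarrow> real \<Rightarrow> real \<Rightarrow> real \<Rightarrow> real \<Rightarrow> real" where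
  "M2t r eps epst tau omega tau1 tau2 atau zeta =
     (1 - tau2) / (eps - epst) * ((1 - exp (- r * (omega - tau))) / (r * atau))
       * (exp (eps * (tau - zeta)) - exp (epst * (tau - zeta)))
     - (1 - tau1) / eps * (exp (eps * (tau - zeta)) - 1)"

end

theory Submission
  imports Defs
begin

lemma quasi_lemma:
  fixes f E H :: "real \<Rightarrow> real"
  assumes der: "\<And>x. (f has_real_derivative (E x * H x)) (at x)"
    and Epos: "\<And>x. E x > 0" and Hmono: "\<And>x y. x < y \<Longrightarrow> H x < H y"
    and uv: "u < v" and vw: "v < w"
  shows "f v < max (f u) (f w)"
proof (rule ccontr)
  assume "\<not> ?thesis"
  then have h1: "f u \<le> f v" and h2: "f w \<le> f v" by auto
  obtain s1 where s1: "u < s1" "s1 < v" "f v - f u = (v - u) * (E s1 * H s1)"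
    using MVT2[of u v f "\<lambda>x. E x * H x"] uv der by blast
  obtain s2 where s2: "v < s2" "s2 < w" "f w - f v = (w - v) * (E s2 * H s2)"
    using MVT2[of v w f "\<lambda>x. E x * H x"] vw der by blast
  have "E s1 * H s1 \<ge> 0"
  proof (rule ccontr)
    assume "\<not> ?thesis"
    then have "(v - u) * (E s1 * H s1) < 0" using uv by (simp add: mult_pos_neg)
    then show False using s1 h1 by linarith
  qed
  then have a1: "H s1 \<ge> 0" using Epos[of s1] by (simp add: zero_le_mult_iff)
  have "E s2 * H s2 \<le> 0"
  proof (rule ccontr)
    assume "\<not> ?thesis"
    then have "(w - v) * (E s2 * H s2) > 0" using vw by simp
    then show False using s2 h2 by linarith
  qed
  then have a2: "H s2 \<le> 0" using Epos[of s2] by (simp add: mult_le_0_iff)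
  have "H s1 < H s2" using Hmono s1 s2 by simp
  then show False using a1 a2 by simp
qed

lemma dec_lemma:
  fixes f E H :: "real \<Rightarrow> real"
  assumes der: "\<And>x. (f has_real_derivative (E x * H x)) (at x)"
    and Epos: "\<And>x. E x > 0" and Hmono: "\<And>x y. x < y \<Longrightarrow> H x < H y"
    and Ht: "H t \<le> 0" and zt: "z < t"
  shows "f z > f t"
proof -
  obtain s where s: "z < s" "s < t" "f t - f z = (t - z) * (E s * H s)"
    using MVT2[of z t f "\<lambda>x. E x * H x"] zt der by blast
  have "H s < 0" using Hmono[OF s(2)] Ht by simp
  then have "E s * H s < 0" using Epos[of s] by (simp add: mult_pos_neg)
  then have "(t - z) * (E s * H s) < 0" using zt by (simp add: mult_pos_neg)
  then show ?thesis using s by linarith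
qed

lemma M_deriv:
  fixes C e et q t :: real
  shows "((\<lambda>z. C * (exp (e * (t - z)) - exp (et * (t - z))) - q * (exp (e * (t - z)) - 1))
     has_real_derivative (exp (e * (t - z)) * (C * et * exp ((et - e) * (t - z)) - (C - q) * e))) (at z)"
proof -
  have "((\<lambda>z. C * (exp (e * (t - z)) - exp (et * (t - z))) - q * (exp (e * (t - z)) - 1))
     has_real_derivative (C * (exp (e * (t - z)) * (e * (0 - 1)) - exp (et * (t - z)) * (et * (0 - 1)))
        - q * (exp (e * (t - z)) * (e * (0 - 1)) - 0))) (at z)"
    by (intro derivative_eq_intros) auto
  moreover have "exp (e * (t - z)) * exp ((et - e) * (t - z)) = exp (et * (t - z))"
    by (simp add: exp_add[symmetric] algebra_simps)
  ultimately show ?thesis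
    by (simp add: algebra_simps)
qed

lemma H_mono:
  fixes C e et q t :: real
  assumes K: "C * (e - et) > 0" and et: "et > 0"
    and xy: "x < y"
  shows "C * et * exp ((et - e) * (t - x)) - (C - q) * e < C * et * exp ((et - e) * (t - y)) - (C - q) * e"
proof (cases "C > 0")
  case True
  then have "e - et > 0" using K by (simp add: zero_less_mult_iff)
  then have "0 < (e - et) * (y - x)" using xy by simp
  moreover have "(et - e) * (t - x) - (et - e) * (t - y) = - ((e - et) * (y - x))" by (simp add: algebra_simps)
  ultimately have "(et - e) * (t - x) < (et - e) * (t - y)" by linarith
  then have ex: "exp ((et - e) * (t - x)) < exp ((et - e) * (t - y))" by simp
  have "C * et > 0" using True et by simp
  then have "C * et * exp ((et - e) * (t - x)) < C * et * exp ((et - e) * (t - y))"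
    using mult_strict_left_mono[OF ex] by blast
  then show ?thesis by linarith
next
  case False
  then have Cn: "C < 0" using K by (cases "C = 0") auto
  then have "e - et < 0" using K by (simp add: zero_less_mult_iff)
  then have "(e - et) * (y - x) < 0" using xy by (simp add: mult_neg_pos)
  moreover have "(et - e) * (t - x) - (et - e) * (t - y) = - ((e - et) * (y - x))" by (simp add: algebra_simps)
  ultimately have "(et - e) * (t - x) > (et - e) * (t - y)" by linarith
  then have ex: "exp ((et - e) * (t - x)) > exp ((et - e) * (t - y))" by simp
  have "C * et < 0" using Cn et by (simp add: mult_neg_pos)
  then have "C * et * exp ((et - e) * (t - x)) < C * et * exp ((et - e) * (t - y))"
    using mult_strict_left_mono_neg[OF ex] by blast
  then show ?thesis by linarith
qed

theorem theorem3p3: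
  fixes r \<mu> \<sigma> \<gamma> \<xi> \<alpha> \<beta> a \<tau> \<omega> \<tau>1 \<tau>2 Am Bm c :: real
  defines "\<nu> \<equiv> (\<mu> - r) / \<sigma>"
  defines "\<epsilon> \<equiv> \<gamma> - r - \<xi> * \<nu>"
  defines "\<epsilon>t \<equiv> \<alpha> - r - \<beta> * \<nu>"
  defines "a\<tau> \<equiv> annuity r Am Bm c \<tau>"
  defines "M \<equiv> M2t r \<epsilon> \<epsilon>t \<tau> \<omega> \<tau>1 \<tau>2 a\<tau>"
  assumes hr: "r > 0" and hmu: "\<mu> > r" and hsig: "\<sigma> > 0"
    and heps: "\<epsilon> \<noteq> 0" and hepst: "\<epsilon>t \<noteq> \<epsilon>" and hepst_pos: "\<epsilon>t > 0"
    and hages: "a < \<tau>" "\<tau> < \<omega>"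
    and htau1: "0 \<le> \<tau>1" "\<tau>1 < 1" and htau2: "0 \<le> \<tau>2" "\<tau>2 < 1"
    and hc: "c > 0" "c \<noteq> 1"
    and hint: "set_integrable lborel {0..} (ann_integrand r Am Bm c \<tau>)"
    and hatau: "a\<tau> > 0"
  shows "M \<tau> = 0
    \<and> deriv M \<tau> = 1 - \<tau>1 - (1 - \<tau>2) / (r * a\<tau>) * (1 - exp (- r * (\<omega> - \<tau>)))
    \<and> (M a \<ge> 0 \<and> deriv M \<tau> > 0 \<longrightarrow>
        (\<exists>\<zeta>b. a \<le> \<zeta>b \<and> \<zeta>b < \<tau> \<and> (\<forall>\<zeta>. a \<le> \<zeta> \<and> \<zeta> < \<zeta>b \<longrightarrow> M \<zeta> > 0)
             \<and> M \<zeta>b = 0 \<and> (\<forall>\<zeta>. \<zeta>b < \<zeta> \<and> \<zeta> < \<tau> \<longrightarrow> M \<zeta> < 0)))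
    \<and> (M a < 0 \<longrightarrow> (\<forall>\<zeta>. a \<le> \<zeta> \<and> \<zeta> < \<tau> \<longrightarrow> M \<zeta> < 0))
    \<and> (deriv M \<tau> \<le> 0 \<longrightarrow> (\<forall>\<zeta>. a \<le> \<zeta> \<and> \<zeta> < \<tau> \<longrightarrow> M \<zeta> > 0))"
proof -
  define X where "X = 1 - exp (- r * (\<omega> - \<tau>))"
  define C where "C = (1 - \<tau>2) / (\<epsilon> - \<epsilon>t) * (X / (r * a\<tau>))"
  define q where "q = (1 - \<tau>1) / \<epsilon>"
  define E where "E = (\<lambda>z. exp (\<epsilon> * (\<tau> - z)))"
  define H where "H = (\<lambda>z. C * \<epsilon>t * exp ((\<epsilon>t - \<epsilon>) * (\<tau> - z)) - (C - q) * \<epsilon>)"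
  have Mdef: "M = (\<lambda>z. C * (exp (\<epsilon> * (\<tau> - z)) - exp (\<epsilon>t * (\<tau> - z))) - q * (exp (\<epsilon> * (\<tau> - z)) - 1))"
    unfolding M_def M2t_def C_def q_def X_def by (rule ext) simp
  have Xpos: "X > 0" unfolding X_def using hr hages by simp
  have CK: "C * (\<epsilon> - \<epsilon>t) = (1 - \<tau>2) / (r * a\<tau>) * X"
  proof -
    have ne: "\<epsilon> - \<epsilon>t \<noteq> 0" using hepst by simp
    have "C * (\<epsilon> - \<epsilon>t) = (1 - \<tau>2) * (X / (r * a\<tau>))"
      unfolding C_def using ne by simp
    then show ?thesis by simp
  qed
  have Kpos: "C * (\<epsilon> - \<epsilon>t) > 0" unfolding CK using Xpos htau2 hr hatau by simp
  have der: "\<And>x. (M has_real_derivative (E x * H x)) (at x)"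
    unfolding Mdef E_def H_def by (rule M_deriv)
  have Epos: "\<And>x. E x > 0" unfolding E_def by simp
  have Hmono: "\<And>x y. x < y \<Longrightarrow> H x < H y"
    unfolding H_def using H_mono[OF Kpos hepst_pos] by blast
  have M0: "M \<tau> = 0" unfolding Mdef by simp
  have dM: "deriv M \<tau> = E \<tau> * H \<tau>" using der DERIV_imp_deriv by blast
  have Ht: "E \<tau> * H \<tau> = 1 - \<tau>1 - (1 - \<tau>2) / (r * a\<tau>) * (1 - exp (- r * (\<omega> - \<tau>)))"
  proof -
    have "E \<tau> * H \<tau> = q * \<epsilon> - C * (\<epsilon> - \<epsilon>t)" unfolding E_def H_def by (simp add: algebra_simps)
    also have "\<dots> = 1 - \<tau>1 - (1 - \<tau>2) / (r * a\<tau>) * X" unfolding CK q_def using heps by simp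
    finally show ?thesis unfolding X_def .
  qed
  have qc: "\<And>u v w. u < v \<Longrightarrow> v < w \<Longrightarrow> M v < max (M u) (M w)"
    using quasi_lemma[OF der Epos Hmono] by blast
  have P1: "M a \<ge> 0 \<and> deriv M \<tau> > 0 \<longrightarrow>
        (\<exists>\<zeta>b. a \<le> \<zeta>b \<and> \<zeta>b < \<tau> \<and> (\<forall>\<zeta>. a \<le> \<zeta> \<and> \<zeta> < \<zeta>b \<longrightarrow> M \<zeta> > 0)
             \<and> M \<zeta>b = 0 \<and> (\<forall>\<zeta>. \<zeta>b < \<zeta> \<and> \<zeta> < \<tau> \<longrightarrow> M \<zeta> < 0))"
  proof
    assume asm: "M a \<ge> 0 \<and> deriv M \<tau> > 0"
    have "(M has_real_derivative (deriv M \<tau>)) (at \<tau>)" using der dM by simp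
    then obtain d where d: "d > 0" "\<And>h. h > 0 \<Longrightarrow> h < d \<Longrightarrow> M (\<tau> - h) < M \<tau>"
      using DERIV_pos_inc_left asm by blast
    define p where "p = \<tau> - min (d/2) (\<tau> - a)"
    have p1: "a \<le> p" "p < \<tau>" unfolding p_def using d hages by auto
    have Mp: "M p < 0" unfolding p_def using d(2)[of "min (d/2) (\<tau> - a)"] d hages M0 by simp
    have cont: "continuous_on {a..p} M"
      using der by (meson DERIV_isCont continuous_at_imp_continuous_on)
    obtain zb where zb: "a \<le> zb" "zb \<le> p" "M zb = 0"
      using IVT2'[of M p 0 a, OF Mp[THEN less_imp_le] _ p1(1) cont] asm by auto
    have neg: "\<forall>\<zeta>. zb < \<zeta> \<and> \<zeta> < \<tau> \<longrightarrow> M \<zeta> < 0"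
      using qc[of zb _ \<tau>] zb M0 by fastforce
    have pos: "\<forall>\<zeta>. a \<le> \<zeta> \<and> \<zeta> < zb \<longrightarrow> M \<zeta> > 0"
    proof (intro allI impI)
      fix z assume z: "a \<le> z \<and> z < zb"
      define m where "m = (zb + \<tau>) / 2"
      have m: "zb < m" "m < \<tau>" unfolding m_def using zb p1 by auto
      have "M m < 0" using neg m by blast
      moreover have "M zb < max (M z) (M m)" using qc[of z zb m] z m by simp
      ultimately show "M z > 0" using zb by (simp add: max_def split: if_splits)
    qed
    show "\<exists>\<zeta>b. a \<le> \<zeta>b \<and> \<zeta>b < \<tau> \<and> (\<forall>\<zeta>. a \<le> \<zeta> \<and> \<zeta> < \<zeta>b \<longrightarrow> M \<zeta> > 0)
             \<and> M \<zeta>b = 0 \<and> (\<forall>\<zeta>. \<zeta>b < \<zeta> \<and> \<zeta> < \<tau> \<longrightarrow> M \<zeta> < 0)"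
      using zb p1 pos neg by (intro exI[of _ zb]) auto
  qed
  have P2: "M a < 0 \<longrightarrow> (\<forall>\<zeta>. a \<le> \<zeta> \<and> \<zeta> < \<tau> \<longrightarrow> M \<zeta> < 0)"
  proof (intro impI allI)
    fix z assume Ma: "M a < 0" and z: "a \<le> z \<and> z < \<tau>"
    show "M z < 0"
    proof (cases "z = a")
      case True then show ?thesis using Ma by simp
    next
      case False
      then have "a < z" using z by simp
      then show ?thesis using qc[of a z \<tau>] z Ma M0 by simp
    qed
  qed
  have P3: "deriv M \<tau> \<le> 0 \<longrightarrow> (\<forall>\<zeta>. a \<le> \<zeta> \<and> \<zeta> < \<tau> \<longrightarrow> M \<zeta> > 0)"
  proof (intro impI allI)
    fix z assume d: "deriv M \<tau> \<le> 0" and z: "a \<le> z \<and> z < \<tau>"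
    have "H \<tau> \<le> 0" using d dM Epos[of \<tau>] by (simp add: mult_le_0_iff)
    then show "M z > 0" using dec_lemma[OF der Epos Hmono, of \<tau> z] z M0 by simp
  qed
  show ?thesis using M0 dM Ht P1 P2 P3 by simp
qed

end
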